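(* Let $f\in L^2(\mathbb{R}^d)$ be real-valued with Fourier transform $\hat f(\omega)=\int_{\mathbb{R}^d}f(x)e^{-i\omega^Tx}dx$, magnitude $|\hat f|$, phase $\angle\hat f$, and $0<\int_{\mathbb{R}^d}|\hat f|<\infty$. Let $P$ be the set of continuous probability densities $p$ on $\mathbb{R}^d$ with $p(\omega)>0$ whenever $|\hat f(\omega)|>0$. For $p\in P$, let $W_1,\dots,W_D$ be i.i.d. with density $p$, $B_1,\dots,B_D$ i.i.d. uniform on $[0,2\pi]$ (density $p_B$) independent of the $W_k$, and $$G(x)=\sum_{k=1}^D C_k\cos(W_k^Tx+B_k),\qquad C_k = \frac{2}{D(2\pi)^d}\frac{|\hat f(W_k)|}{p(W_k)}\cos(\angle\hat f(W_k)-B_k).$$ Write $\mathbb{E}_{p,p_B}$ for expectation under this construction. Let $\tilde p(\omega) = |\hat f(\omega)|/\int_{\mathbb{R}^d}|\hat f(\tilde\omega)|d\tilde\omega$. Then for every $x\in\mathbb{R}^d$, $$\mathbb{E}_{\tilde p,p_B}[G(x)^2]\le\sqrt3\,\min_{p\in P}\mathbb{E}_{p,p_B}[G(x)^2].$$ *)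

theory Defs
  imports "HOL-Probability.Probability"
begin

text \<open>Points of R^d are modelled as vectors of type real^'n, with d = CARD('n).\<close>

definition trunc_fourier :: "(real^'n \<Rightarrow> real) \<Rightarrow> real \<Rightarrow> real^'n \<Rightarrow> complex" where
  "trunc_fourier f R w =
     (LINT x : cball 0 R | lborel. complex_of_real (f x) * cis (- (w \<bullet> x)))"

text \<open>F is (a representative of) the L^2 (Plancherel) Fourier transform of f, i.e.
  F is the L^2 limit of the truncated Fourier integrals as R tends to infinity.\<close>
definition is_fourier_transform_L2 :: "(real^'n \<Rightarrow> real) \<Rightarrow> (real^'n \<Rightarrow> complex) \<Rightarrow> bool" where
  "is_fourier_transform_L2 f F \<longleftrightarrow>
     F \<in> borel_measurable lborel \<and>
     ((\<lambda>R. \<integral>\<^sup>+ w. ennreal ((cmod (F w - trunc_fourier f R w))\<^sup>2) \<partial>lborel)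
        \<longlongrightarrow> 0) at_top"

definition admissible_densities :: "(real^'n \<Rightarrow> complex) \<Rightarrow> (real^'n \<Rightarrow> real) set" where
  "admissible_densities F =
     {p. continuous_on UNIV p \<and> (\<forall>w. 0 \<le> p w) \<and>
         (\<integral>\<^sup>+ w. ennreal (p w) \<partial>lborel) = 1 \<and>
         (\<forall>w. 0 < cmod (F w) \<longrightarrow> 0 < p w)}"

definition rff_law :: "nat \<Rightarrow> (real^'n \<Rightarrow> real) \<Rightarrow> (nat \<Rightarrow> ((real^'n) \<times> real)) measure" where
  "rff_law D p =
     PiM {..<D} (\<lambda>_. density (lborel \<Otimes>\<^sub>M lborel)
        (\<lambda>(w, b). ennreal (p w * indicator {0..2*pi} b / (2*pi))))"

definition rff_coeff :: "nat \<Rightarrow> (real^'n \<Rightarrow> complex) \<Rightarrow> (real^'n \<Rightarrow> real) \<Rightarrow> real^'n \<Rightarrow> real \<Rightarrow> real" where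
  "rff_coeff D F p w b =
     2 / (real D * (2*pi) ^ CARD('n)) * (cmod (F w) / p w) * cos (Arg (F w) - b)"

definition rff_G :: "nat \<Rightarrow> (real^'n \<Rightarrow> complex) \<Rightarrow> (real^'n \<Rightarrow> real) \<Rightarrow> real^'n
                      \<Rightarrow> (nat \<Rightarrow> ((real^'n) \<times> real)) \<Rightarrow> real" where
  "rff_G D F p x z =
     (\<Sum>k<D. rff_coeff D F p (fst (z k)) (snd (z k)) * cos (fst (z k) \<bullet> x + snd (z k)))"

definition rff_second_moment :: "nat \<Rightarrow> (real^'n \<Rightarrow> complex) \<Rightarrow> (real^'n \<Rightarrow> real) \<Rightarrow> real^'n \<Rightarrow> ennreal" where
  "rff_second_moment D F p x = (\<integral>\<^sup>+ z. ennreal ((rff_G D F p x z)\<^sup>2) \<partial>rff_law D p)"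

definition opt_density :: "(real^'n \<Rightarrow> complex) \<Rightarrow> real^'n \<Rightarrow> real" where
  "opt_density F w = cmod (F w) / (\<integral> v. cmod (F v) \<partial>lborel)"

end

theory Submission
  imports Defs
begin

lemma trig_prod: fixes a b c :: real shows "(cos (a - b))\<^sup>2 * (cos (c + b))\<^sup>2 = (cos (a + c) + cos (a - c - 2*b))\<^sup>2 / 4"
proof -
  have "cos (a - b) * cos (c + b) = (cos (a - c - 2*b) + cos (a + c)) / 2"
    by (simp add: cos_times_cos algebra_simps)
  then have "(cos (a - b) * cos (c + b))\<^sup>2 = ((cos (a - c - 2*b) + cos (a + c)) / 2)\<^sup>2" by (simp only:)
  then show ?thesis by (simp add: power_mult_distrib power_divide add.commute)
qed

lemma trig_has_integral:
  fixes a c :: real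
  defines "C \<equiv> cos (a + c)"
  shows "((\<lambda>b. (cos (a - b))\<^sup>2 * (cos (c + b))\<^sup>2) has_integral (pi * (2 * C\<^sup>2 + 1) / 4)) {0..2*pi}"
proof -
  define g where "g = a - c"
  define \<Phi> where "\<Phi> = (\<lambda>b. C\<^sup>2 * b / 4 - C * sin (g - 2*b) / 4 + b / 8 - sin (2*g - 4*b) / 32)"
  have der: "(\<Phi> has_real_derivative ((cos (a - b))\<^sup>2 * (cos (c + b))\<^sup>2)) (at b)" for b
  proof -
    have "(\<Phi> has_real_derivative (C\<^sup>2 / 4 + C * cos (g - 2*b) / 2 + 1/8 + cos (2*g - 4*b) / 8)) (at b)"
      unfolding \<Phi>_def by (auto intro!: derivative_eq_intros)
    moreover have "C\<^sup>2 / 4 + C * cos (g - 2*b) / 2 + 1/8 + cos (2*g - 4*b) / 8 = (cos (a - b))\<^sup>2 * (cos (c + b))\<^sup>2"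
    proof -
      have "cos (2*g - 4*b) = 2 * (cos (g - 2*b))\<^sup>2 - 1"
        using cos_double_cos[of "g - 2*b"] by (simp add: algebra_simps)
      then show ?thesis unfolding trig_prod C_def g_def by (simp add: power2_eq_square field_simps)
    qed
    ultimately show ?thesis by simp
  qed
  have "((\<lambda>b. (cos (a - b))\<^sup>2 * (cos (c + b))\<^sup>2) has_integral (\<Phi> (2*pi) - \<Phi> 0)) {0..2*pi}"
    by (rule fundamental_theorem_of_calculus) (auto intro: der[THEN has_field_derivative_at_within, unfolded has_real_derivative_iff_has_vector_derivative])
  moreover have "\<Phi> (2*pi) - \<Phi> 0 = pi * (2 * C\<^sup>2 + 1) / 4"
  proof -
    have s1: "sin (g - 2*(2*pi)) = sin g" by (simp add: sin_diff)
    have s2: "sin (2*g - 4*(2*pi)) = sin (2*g)" by (simp add: sin_diff)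
    show ?thesis unfolding \<Phi>_def using s1 s2 by (simp add: field_simps)
  qed
  ultimately show ?thesis by simp
qed

lemma trig_nn_integral:
  fixes a c :: real
  shows "(\<integral>\<^sup>+ b. ennreal (indicator {0..2*pi} b / (2*pi) * ((cos (a - b))\<^sup>2 * (cos (c + b))\<^sup>2)) \<partial>lborel)
     = ennreal (((cos (a + c))\<^sup>2 + 1/2) / 4)"
proof -
  have hi: "((\<lambda>b. (cos (a - b))\<^sup>2 * (cos (c + b))\<^sup>2 / (2*pi)) has_integral (pi * (2 * (cos (a + c))\<^sup>2 + 1) / 4 / (2*pi))) {0..2*pi}"
    using has_integral_divide[OF trig_has_integral[of a c], of "2*pi"] by simp
  have "(\<integral>\<^sup>+ b. ennreal (indicator {0..2*pi} b / (2*pi) * ((cos (a - b))\<^sup>2 * (cos (c + b))\<^sup>2)) \<partial>lborel)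
      = (\<integral>\<^sup>+ b. ennreal ((cos (a - b))\<^sup>2 * (cos (c + b))\<^sup>2 / (2*pi)) * indicator {0..2*pi} b \<partial>lborel)"
    by (intro nn_integral_cong) (auto split: split_indicator)
  also have "\<dots> = ennreal (pi * (2 * (cos (a + c))\<^sup>2 + 1) / 4 / (2*pi))"
    by (rule nn_integral_has_integral_lebesgue'[OF _ hi]) simp
  also have "pi * (2 * (cos (a + c))\<^sup>2 + 1) / 4 / (2*pi) = ((cos (a + c))\<^sup>2 + 1/2) / 4"
    by (simp add: field_simps)
  finally show ?thesis .
qed

lemma amgm2: "2 * (x::real) * y \<le> x\<^sup>2 + y\<^sup>2"
proof -
  have "0 \<le> (x - y)\<^sup>2" by simp
  then show ?thesis unfolding power2_diff by linarith
qed
lemma amgm3: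
  fixes a s p S h :: real
  assumes pp: "0 < p" and S_pos: "0 < S" and hs: "h = s\<^sup>2"
  shows "a * s \<le> a\<^sup>2 / p * h / (2*S) + p * S / 2"
proof -
  have e: "a\<^sup>2 / p * h / (2*S) + p * S / 2 = ((a * s)\<^sup>2 + (p * S)\<^sup>2) / (2 * p * S)"
    using pp S_pos unfolding hs by (simp add: field_simps power2_eq_square)
  have "2 * p * S * (a * s) \<le> (a * s)\<^sup>2 + (p * S)\<^sup>2"
    using amgm2[of "a * s" "p * S"] by (simp add: algebra_simps)
  then show ?thesis unfolding e using pp S_pos by (simp add: pos_le_divide_eq algebra_simps)
qed

lemma key_ineq:
  fixes a p h :: "'a \<Rightarrow> real" and M :: "'a measure"
  assumes [measurable]: "a \<in> borel_measurable M" "p \<in> borel_measurable M" "h \<in> borel_measurable M"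
    and a_nn: "\<And>w. 0 \<le> a w" and p_nn: "\<And>w. 0 \<le> p w"
    and p_one: "(\<integral>\<^sup>+ w. ennreal (p w) \<partial>M) = 1"
    and p_pos: "\<And>w. a w \<noteq> 0 \<Longrightarrow> 0 < p w"
    and m: "0 < m" and h_lo: "\<And>w. m \<le> h w" and h_hi: "\<And>w. h w \<le> 3 * m"
    and a_int: "integrable M a" and I_def: "I = integral\<^sup>L M a" and I_pos: "0 < I"
  shows "(\<integral>\<^sup>+ w. ennreal (I * a w * h w) \<partial>M) < \<infinity>"
    and "(\<integral>\<^sup>+ w. ennreal (I * a w * h w) \<partial>M)
           \<le> ennreal (sqrt 3) * (\<integral>\<^sup>+ w. ennreal ((a w)\<^sup>2 / p w * h w) \<partial>M)"
proof -
  have h_nn: "0 \<le> h w" for w using h_lo[of w] m by linarith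
  define s where "s w = sqrt (h w)" for w
  have s_meas[measurable]: "s \<in> borel_measurable M" unfolding s_def by measurable
  have s_lo: "sqrt m \<le> s w" for w unfolding s_def using h_lo by simp
  have s_hi: "s w \<le> sqrt (3*m)" for w unfolding s_def using h_hi by simp
  have s_nn: "0 \<le> s w" for w using s_lo[of w] m by (meson order_trans real_sqrt_ge_zero less_imp_le)
  have hs: "h w = (s w)\<^sup>2" for w unfolding s_def using h_nn by simp
  have ah_int: "integrable M (\<lambda>w. a w * h w)"
    by (rule Bochner_Integration.integrable_bound[where f="\<lambda>w. 3 * m * a w"])
       (use m h_hi a_nn in \<open>auto intro!: a_int mult_left_mono simp: h_nn abs_mult mult.commute\<close>)
  have as_int: "integrable M (\<lambda>w. a w * s w)"
    by (rule Bochner_Integration.integrable_bound[where f="\<lambda>w. sqrt (3*m) * a w"])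
       (use m s_hi a_nn in \<open>auto intro!: a_int mult_left_mono simp: s_nn abs_mult mult.commute\<close>)
  have Iah: "(\<integral>\<^sup>+ w. ennreal (I * a w * h w) \<partial>M) = ennreal (I * integral\<^sup>L M (\<lambda>w. a w * h w))"
    using ah_int I_pos a_nn h_nn
    by (subst nn_integral_eq_integral) (auto simp: mult.assoc)
  then show "(\<integral>\<^sup>+ w. ennreal (I * a w * h w) \<partial>M) < \<infinity>" by simp
  define Q where "Q = (\<integral>\<^sup>+ w. ennreal ((a w)\<^sup>2 / p w * h w) \<partial>M)"
  show "(\<integral>\<^sup>+ w. ennreal (I * a w * h w) \<partial>M) \<le> ennreal (sqrt 3) * Q"
  proof (cases "Q = \<infinity>")
    case True
    then show ?thesis by (simp add: ennreal_mult_top)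
  next
    case False
    then obtain q where q: "Q = ennreal q" "0 \<le> q" by (cases Q) auto
    define S where "S = integral\<^sup>L M (\<lambda>w. a w * s w)"
    have sm: "sqrt m * a w \<le> a w * s w" for w
      using mult_right_mono[OF s_lo a_nn, of w] by (simp add: mult.commute)
    have "integral\<^sup>L M (\<lambda>w. sqrt m * a w) \<le> S"
      unfolding S_def using as_int a_int
      by (intro integral_mono) (auto simp: sm)
    then have IS: "sqrt m * I \<le> S" by (simp add: I_def)
    have "0 < sqrt m * I" using m I_pos by simp
    then have S_pos: "0 < S" using IS by linarith
    have amgm: "a w * s w \<le> (a w)\<^sup>2 / p w * h w / (2*S) + p w * S / 2" for w
    proof (cases "a w = 0")
      case True then show ?thesis using p_nn[of w] S_pos by simp
    next
      case False
      then have pp: "0 < p w" using p_pos by simp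
      show ?thesis by (rule amgm3[OF pp S_pos hs])
    qed
    have "ennreal S = (\<integral>\<^sup>+ w. ennreal (a w * s w) \<partial>M)"
      unfolding S_def using as_int a_nn s_nn by (subst nn_integral_eq_integral) auto
    also have "\<dots> \<le> (\<integral>\<^sup>+ w. ennreal ((a w)\<^sup>2 / p w * h w / (2*S) + p w * S / 2) \<partial>M)"
      by (intro nn_integral_mono ennreal_leI amgm)
    also have "\<dots> = (\<integral>\<^sup>+ w. ennreal ((a w)\<^sup>2 / p w * h w) * ennreal (1/(2*S)) + ennreal (p w) * ennreal (S/2) \<partial>M)"
    proof (intro nn_integral_cong)
      fix w
      have X: "0 \<le> (a w)\<^sup>2 / p w * h w" using p_nn[of w] h_nn[of w] by simp
      have "ennreal ((a w)\<^sup>2 / p w * h w / (2*S) + p w * S / 2)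
          = ennreal ((a w)\<^sup>2 / p w * h w * (1 / (2*S)) + p w * (S / 2))" by simp
      also have "\<dots> = ennreal ((a w)\<^sup>2 / p w * h w * (1 / (2*S))) + ennreal (p w * (S / 2))"
        using X S_pos p_nn[of w] h_nn[of w] by (intro ennreal_plus mult_nonneg_nonneg) auto
      also have "\<dots> = ennreal ((a w)\<^sup>2 / p w * h w) * ennreal (1/(2*S)) + ennreal (p w) * ennreal (S/2)"
        by (simp only: ennreal_mult'[OF X] ennreal_mult'[OF p_nn[of w]])
      finally show "ennreal ((a w)\<^sup>2 / p w * h w / (2*S) + p w * S / 2)
          = ennreal ((a w)\<^sup>2 / p w * h w) * ennreal (1/(2*S)) + ennreal (p w) * ennreal (S/2)" .
    qed
    also have "\<dots> = Q * ennreal (1/(2*S)) + 1 * ennreal (S/2)"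
      unfolding Q_def by (simp add: nn_integral_add nn_integral_multc p_one)
    also have "\<dots> = ennreal (q / (2*S) + S/2)"
      using q S_pos by (simp add: ennreal_mult[symmetric] ennreal_plus)
    finally have "S \<le> q / (2*S) + S/2" using S_pos q by (subst (asm) ennreal_le_iff) auto
    then have "2*S*S \<le> 2*S*(q / (2*S) + S/2)" using S_pos by (intro mult_left_mono) auto
    also have "\<dots> = q + S*S" using S_pos by (simp add: distrib_left)
    finally have Sq: "S\<^sup>2 \<le> q" by (simp add: power2_eq_square)
    have "integral\<^sup>L M (\<lambda>w. a w * h w) \<le> integral\<^sup>L M (\<lambda>w. sqrt (3*m) * (a w * s w))"
    proof (intro integral_mono ah_int)
      show "integrable M (\<lambda>w. sqrt (3*m) * (a w * s w))" using as_int by simp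
      fix w
      have "h w \<le> sqrt (3*m) * s w" unfolding hs power2_eq_square
        using s_hi[of w] s_nn[of w] by (simp add: mult_right_mono)
      then show "a w * h w \<le> sqrt (3*m) * (a w * s w)"
        using a_nn[of w] by (simp add: mult_left_mono algebra_simps)
    qed
    have ah_nn: "0 \<le> integral\<^sup>L M (\<lambda>w. a w * h w)" by (intro Bochner_Integration.integral_nonneg) (simp add: a_nn h_nn)
    from \<open>integral\<^sup>L M (\<lambda>w. a w * h w) \<le> _\<close> have ahS: "integral\<^sup>L M (\<lambda>w. a w * h w) \<le> sqrt (3*m) * S" by (simp add: S_def)
    have "I * integral\<^sup>L M (\<lambda>w. a w * h w) \<le> (S / sqrt m) * (sqrt (3*m) * S)"
    proof (rule mult_mono)
      show "I \<le> S / sqrt m" using IS m by (simp add: field_simps)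
    qed (use ahS I_pos S_pos m ah_nn in auto)
    also have "\<dots> = sqrt 3 * S\<^sup>2" using m by (simp add: real_sqrt_mult power2_eq_square field_simps)
    also have "\<dots> \<le> sqrt 3 * q" using Sq by simp
    finally show ?thesis unfolding Iah q using q by (simp add: ennreal_mult'[symmetric] ennreal_leI)
  qed
qed

lemma prod_single:
  assumes "finite A" "k \<in> A" "\<And>i. i \<in> A \<Longrightarrow> i \<noteq> k \<Longrightarrow> f i = 1"
  shows "prod f A = f k"
proof -
  have "prod f A = f k * prod f (A - {k})" using assms by (intro prod.remove) auto
  also have "prod f (A - {k}) = 1" using assms by (intro prod.neutral) auto
  finally show ?thesis by simp
qed

lemma prod_pair:
  assumes "finite A" "k \<in> A" "j \<in> A" "k \<noteq> j" "\<And>i. i \<in> A \<Longrightarrow> i \<noteq> k \<Longrightarrow> i \<noteq> j \<Longrightarrow> f i = 1"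
  shows "prod f A = f k * f j"
proof -
  have "prod f A = f k * prod f (A - {k})" using assms by (intro prod.remove) auto
  also have "prod f (A - {k}) = f j" using assms by (intro prod_single) auto
  finally show ?thesis .
qed

lemma sum_if_eq:
  fixes A :: real
  assumes "k < D"
  shows "(\<Sum>j<D. if k = j then A else B) = A + (real D - 1) * B"
proof -
  have "(\<Sum>j<D. if k = j then A else B) = (if k = k then A else B) + (\<Sum>j\<in>{..<D} - {k}. if k = j then A else B)"
    using assms by (intro sum.remove) auto
  also have "(\<Sum>j\<in>{..<D} - {k}. if k = j then A else B) = (\<Sum>j\<in>{..<D} - {k}. B)"
    by (intro sum.cong) auto
  also have "\<dots> = (real D - 1) * B" using assms by (simp add: of_nat_diff)
  finally show ?thesis by simp
qed

lemma moment_formula: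
  fixes Y :: "'b \<Rightarrow> real" and M :: "'b measure"
  assumes PM: "prob_space M" and Ym[measurable]: "Y \<in> borel_measurable M"
    and Yint: "integrable M Y" and Dpos: "0 < D"
  shows "(\<integral>\<^sup>+ z. ennreal ((\<Sum>k<D. Y (z k))\<^sup>2) \<partial>PiM {..<D} (\<lambda>_. M)) =
    (if (\<integral>\<^sup>+ u. ennreal ((Y u)\<^sup>2) \<partial>M) = \<infinity> then \<infinity>
     else ennreal (real D * (\<integral> u. (Y u)\<^sup>2 \<partial>M) + real D * (real D - 1) * (\<integral> u. Y u \<partial>M)\<^sup>2))"
proof -
  interpret prob_space M by (rule PM)
  interpret P: product_prob_space "\<lambda>_::nat. M" UNIV ..
  show ?thesis
  proof (cases "(\<integral>\<^sup>+ u. ennreal ((Y u)\<^sup>2) \<partial>M) = \<infinity>")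
    case True
    obtain n where n: "D = Suc n" using Dpos by (cases D) auto
    have ins: "{..<D} = insert n {..<n}" using n by auto
    interpret Pn: prob_space "PiM {..<n} (\<lambda>_. M)" by (rule prob_space_PiM) (rule PM)
    have inner: "(\<integral>\<^sup>+ y. ennreal ((\<Sum>k<D. Y ((x(n := y)) k))\<^sup>2) \<partial>M) = \<infinity>" for x :: "nat \<Rightarrow> 'b"
    proof -
      define r where "r = (\<Sum>k<n. Y (x k))"
      have eq: "(\<Sum>k<D. Y ((x(n := y)) k)) = Y y + r" for y
        unfolding n r_def by (simp add: add.commute)
      have pw: "ennreal ((Y y)\<^sup>2) \<le> 2 * ennreal ((Y y + r)\<^sup>2) + ennreal (2 * r\<^sup>2)" for y
      proof -
        have "(Y y)\<^sup>2 \<le> 2 * (Y y + r)\<^sup>2 + 2 * r\<^sup>2"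
          using sum_squares_ge_zero[of "Y y + 2*r" 0] by (simp add: power2_eq_square algebra_simps)
        then have "ennreal ((Y y)\<^sup>2) \<le> ennreal (2 * (Y y + r)\<^sup>2 + 2 * r\<^sup>2)" by (rule ennreal_leI)
        also have "\<dots> = 2 * ennreal ((Y y + r)\<^sup>2) + ennreal (2 * r\<^sup>2)"
          by (simp add: ennreal_plus ennreal_mult)
        finally show ?thesis .
      qed
      have "\<infinity> = (\<integral>\<^sup>+ y. ennreal ((Y y)\<^sup>2) \<partial>M)" using True by simp
      also have "\<dots> \<le> (\<integral>\<^sup>+ y. 2 * ennreal ((Y y + r)\<^sup>2) + ennreal (2 * r\<^sup>2) \<partial>M)"
        by (intro nn_integral_mono pw)
      also have "\<dots> = 2 * (\<integral>\<^sup>+ y. ennreal ((Y y + r)\<^sup>2) \<partial>M) + ennreal (2 * r\<^sup>2)"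
        by (simp add: nn_integral_add nn_integral_cmult emeasure_space_1)
      finally have "(\<integral>\<^sup>+ y. ennreal ((Y y + r)\<^sup>2) \<partial>M) = \<infinity>"
        by (auto simp: top_unique ennreal_mult_eq_top_iff)
      then show ?thesis by (simp only: eq)
    qed
    have "(\<integral>\<^sup>+ z. ennreal ((\<Sum>k<D. Y (z k))\<^sup>2) \<partial>PiM {..<D} (\<lambda>_. M))
        = (\<integral>\<^sup>+ x. (\<integral>\<^sup>+ y. ennreal ((\<Sum>k<D. Y ((x(n := y)) k))\<^sup>2) \<partial>M) \<partial>PiM {..<n} (\<lambda>_. M))"
      unfolding ins by (rule P.product_nn_integral_insert) (auto simp: ins[symmetric])
    also have "\<dots> = \<infinity>" by (simp only: inner) (simp add: Pn.emeasure_space_1)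
    finally show ?thesis using True by simp
  next
    case False
    have Y2int: "integrable M (\<lambda>u. (Y u)\<^sup>2)"
      using False by (intro integrableI_bounded) (auto simp: top.not_eq_extremum)
    define A where "A = (\<integral> u. (Y u)\<^sup>2 \<partial>M)"
    define \<mu> where "\<mu> = (\<integral> u. Y u \<partial>M)"
    have cross: "integrable (PiM {..<D} (\<lambda>_. M)) (\<lambda>z. Y (z k) * Y (z j)) \<and>
        (\<integral> z. Y (z k) * Y (z j) \<partial>PiM {..<D} (\<lambda>_. M)) = (if k = j then A else \<mu>\<^sup>2)"
      if kj: "k < D" "j < D" for k j
    proof (cases "k = j")
      case True
      define g where "g i = (if i = k then (\<lambda>u. (Y u)\<^sup>2) else (\<lambda>_. 1::real))" for i
      have gi: "integrable M (g i)" for i using Y2int by (simp add: g_def)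
      have pr: "(\<Prod>i\<in>{..<D}. g i (z i)) = Y (z k) * Y (z j)" for z
        using kj True by (subst prod_single[where k=k]) (auto simp: g_def power2_eq_square)
      have "integrable (PiM {..<D} (\<lambda>_. M)) (\<lambda>z. \<Prod>i\<in>{..<D}. g i (z i))"
        by (intro P.product_integrable_prod gi) auto
      moreover have "(\<integral> z. (\<Prod>i\<in>{..<D}. g i (z i)) \<partial>PiM {..<D} (\<lambda>_. M)) = (\<Prod>i\<in>{..<D}. integral\<^sup>L M (g i))"
        by (intro P.product_integral_prod gi) auto
      moreover have "(\<Prod>i\<in>{..<D}. integral\<^sup>L M (g i)) = A"
        using kj by (subst prod_single[where k=k]) (auto simp: g_def A_def prob_space)
      ultimately show ?thesis using True by (simp add: pr)
    next
      case False
      define g where "g i = (if i = k \<or> i = j then Y else (\<lambda>_. 1::real))" for i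
      have gi: "integrable M (g i)" for i using Yint by (simp add: g_def)
      have pr: "(\<Prod>i\<in>{..<D}. g i (z i)) = Y (z k) * Y (z j)" for z
        using kj False by (subst prod_pair[where k=k and j=j]) (auto simp: g_def)
      have "integrable (PiM {..<D} (\<lambda>_. M)) (\<lambda>z. \<Prod>i\<in>{..<D}. g i (z i))"
        by (intro P.product_integrable_prod gi) auto
      moreover have "(\<integral> z. (\<Prod>i\<in>{..<D}. g i (z i)) \<partial>PiM {..<D} (\<lambda>_. M)) = (\<Prod>i\<in>{..<D}. integral\<^sup>L M (g i))"
        by (intro P.product_integral_prod gi) auto
      moreover have "(\<Prod>i\<in>{..<D}. integral\<^sup>L M (g i)) = \<mu>\<^sup>2"
        using kj False by (subst prod_pair[where k=k and j=j]) (auto simp: g_def \<mu>_def prob_space power2_eq_square)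
      ultimately show ?thesis using False by (simp add: pr)
    qed
    have sq: "(\<Sum>k<D. Y (z k))\<^sup>2 = (\<Sum>k<D. \<Sum>j<D. Y (z k) * Y (z j))" for z
      by (simp add: power2_eq_square sum_product)
    have Gint: "integrable (PiM {..<D} (\<lambda>_. M)) (\<lambda>z. (\<Sum>k<D. Y (z k))\<^sup>2)"
      unfolding sq using cross by (intro Bochner_Integration.integrable_sum) auto
    have "(\<integral> z. (\<Sum>k<D. Y (z k))\<^sup>2 \<partial>PiM {..<D} (\<lambda>_. M))
        = (\<Sum>k<D. (\<integral> z. (\<Sum>j<D. Y (z k) * Y (z j)) \<partial>PiM {..<D} (\<lambda>_. M)))"
      unfolding sq by (intro Bochner_Integration.integral_sum Bochner_Integration.integrable_sum) (use cross in auto)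
    also have "\<dots> = (\<Sum>k<D. \<Sum>j<D. (\<integral> z. Y (z k) * Y (z j) \<partial>PiM {..<D} (\<lambda>_. M)))"
      by (intro sum.cong refl Bochner_Integration.integral_sum) (use cross in auto)
    also have "\<dots> = (\<Sum>k<D. \<Sum>j<D. if k = j then A else \<mu>\<^sup>2)"
      by (intro sum.cong refl) (use cross in auto)
    also have "\<dots> = (\<Sum>k<D. A + (real D - 1) * \<mu>\<^sup>2)"
      by (intro sum.cong) (auto simp: sum_if_eq)
    also have "\<dots> = real D * A + real D * (real D - 1) * \<mu>\<^sup>2"
      by (simp add: algebra_simps)
    finally have I: "(\<integral> z. (\<Sum>k<D. Y (z k))\<^sup>2 \<partial>PiM {..<D} (\<lambda>_. M)) = real D * A + real D * (real D - 1) * \<mu>\<^sup>2" .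
    have "(\<integral>\<^sup>+ z. ennreal ((\<Sum>k<D. Y (z k))\<^sup>2) \<partial>PiM {..<D} (\<lambda>_. M))
        = ennreal (\<integral> z. (\<Sum>k<D. Y (z k))\<^sup>2 \<partial>PiM {..<D} (\<lambda>_. M))"
      using Gint by (intro nn_integral_eq_integral) auto
    then show ?thesis using False I by (simp add: A_def \<mu>_def)
  qed
qed

lemma Arg_cos_diff: "cmod z * cos (Arg z - b) = Re z * cos b + Im z * sin b"
proof (cases "z = 0")
  case False
  then show ?thesis by (simp add: cos_diff cos_Arg sin_Arg algebra_simps)
qed simp

lemma Arg_cos_add: "cmod z * cos (Arg z + t) = Re z * cos t - Im z * sin t"
proof (cases "z = 0")
  case False
  then show ?thesis by (simp add: cos_add cos_Arg sin_Arg algebra_simps)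
qed simp

lemma nn_integral_unif: "(\<integral>\<^sup>+ b. ennreal (indicator {0..2*pi} b / (2*pi)) \<partial>lborel) = 1"
proof -
  have "(\<integral>\<^sup>+ b. ennreal (indicator {0..2*pi} b / (2*pi)) \<partial>lborel)
      = (\<integral>\<^sup>+ b. ennreal (1/(2*pi)) * indicator {0..2*pi} b \<partial>lborel)"
    by (intro nn_integral_cong) (auto split: split_indicator)
  also have "\<dots> = ennreal (1/(2*pi)) * ennreal (2*pi)"
    by (simp add: nn_integral_cmult)
  also have "\<dots> = 1" by (simp add: ennreal_mult[symmetric])
  finally show ?thesis .
qed

lemma density_prob:
  fixes p :: "real^'n \<Rightarrow> real"
  assumes [measurable]: "p \<in> borel_measurable lborel" and nn: "\<And>w. 0 \<le> p w"
    and one: "(\<integral>\<^sup>+ w. ennreal (p w) \<partial>lborel) = 1"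
  shows "prob_space (density (lborel \<Otimes>\<^sub>M lborel) (\<lambda>(w, b). ennreal (p w * indicator {0..2*pi} b / (2*pi))))"
proof
  have "emeasure (density (lborel \<Otimes>\<^sub>M lborel) (\<lambda>(w, b). ennreal (p w * indicator {0..2*pi} b / (2*pi))))
     (space (density (lborel \<Otimes>\<^sub>M lborel) (\<lambda>(w, b). ennreal (p w * indicator {0..2*pi} b / (2*pi)))))
     = (\<integral>\<^sup>+ u. (\<lambda>(w, b). ennreal (p w * indicator {0..2*pi} b / (2*pi))) u \<partial>(lborel \<Otimes>\<^sub>M lborel))"
    using sets.top[of "lborel \<Otimes>\<^sub>M lborel"] by (subst emeasure_density) (auto simp: space_pair_measure)
  also have "\<dots> = (\<integral>\<^sup>+ w. \<integral>\<^sup>+ b. ennreal (p w * indicator {0..2*pi} b / (2*pi)) \<partial>lborel \<partial>lborel)"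
    by (subst lborel.nn_integral_fst[symmetric]) auto
  also have "\<dots> = (\<integral>\<^sup>+ w. ennreal (p w) * (\<integral>\<^sup>+ b. ennreal (indicator {0..2*pi} b / (2*pi)) \<partial>lborel) \<partial>lborel)"
    using nn by (intro nn_integral_cong) (simp add: nn_integral_cmult[symmetric] ennreal_mult[symmetric])
  also have "\<dots> = 1" by (simp add: nn_integral_unif one)
  finally show "emeasure (density (lborel \<Otimes>\<^sub>M lborel) (\<lambda>(w, b). ennreal (p w * indicator {0..2*pi} b / (2*pi))))
     (space (density (lborel \<Otimes>\<^sub>M lborel) (\<lambda>(w, b). ennreal (p w * indicator {0..2*pi} b / (2*pi))))) = 1" .
qed

lemma abs_helper: "0 \<le> (k::real) \<Longrightarrow> \<bar>Q\<bar> \<le> K \<Longrightarrow> \<bar>k * Q\<bar> \<le> k * K"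
  by (simp add: abs_mult mult_left_mono)

context
  fixes F :: "real^'n \<Rightarrow> complex" and x :: "real^'n" and D :: nat and p :: "real^'n \<Rightarrow> real"
  assumes F_meas[measurable]: "F \<in> borel_measurable lborel"
    and F_fin: "(\<integral>\<^sup>+ w. ennreal (cmod (F w)) \<partial>lborel) < \<infinity>"
    and p_meas[measurable]: "p \<in> borel_measurable lborel"
    and p_nn: "\<And>w. 0 \<le> p w"
    and p_pos: "\<And>w. F w \<noteq> 0 \<Longrightarrow> 0 < p w"
begin

lemma Y_alt: "rff_coeff D F p w b * cos (w \<bullet> x + b) =
   2 / (real D * (2*pi) ^ CARD('n)) / p w * (Re (F w) * cos b + Im (F w) * sin b) * cos (w \<bullet> x + b)"
  unfolding rff_coeff_def Arg_cos_diff[symmetric] by simp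

lemma dens_eq: "(\<lambda>(w, b). ennreal (p w * indicator {0..2*pi} b / (2*pi)))
   = (\<lambda>u. ennreal (p (fst u) * indicator {0..2*pi} (snd u) / (2*pi)))"
  by (auto simp: fun_eq_iff)

lemma Y_meas: "(\<lambda>u. rff_coeff D F p (fst u) (snd u) * cos (fst u \<bullet> x + snd u))
    \<in> borel_measurable (density (lborel \<Otimes>\<^sub>M lborel) g)"
proof -
  have "(\<lambda>u. 2 / (real D * (2*pi) ^ CARD('n)) / p (fst u) * (Re (F (fst u)) * cos (snd u) + Im (F (fst u)) * sin (snd u)) * cos (fst u \<bullet> x + snd u))
    \<in> borel_measurable (lborel \<Otimes>\<^sub>M lborel)" by measurable
  then show ?thesis by (simp add: Y_alt measurable_cong_sets[OF sets_density refl])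
qed

lemma Y_int:
  "integrable (density (lborel \<Otimes>\<^sub>M lborel) (\<lambda>(w, b). ennreal (p w * indicator {0..2*pi} b / (2*pi))))
      (\<lambda>u. rff_coeff D F p (fst u) (snd u) * cos (fst u \<bullet> x + snd u)) \<and>
   (\<integral> u. rff_coeff D F p (fst u) (snd u) * cos (fst u \<bullet> x + snd u)
      \<partial>density (lborel \<Otimes>\<^sub>M lborel) (\<lambda>(w, b). ennreal (p w * indicator {0..2*pi} b / (2*pi))))
   = (\<integral> u. 2 / (real D * (2*pi) ^ CARD('n)) * (indicator {0..2*pi} (snd u) / (2*pi)) *
        (Re (F (fst u)) * cos (snd u) + Im (F (fst u)) * sin (snd u)) * cos (fst u \<bullet> x + snd u) \<partial>(lborel \<Otimes>\<^sub>M lborel))"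
proof -
  define c where "c = 2 / (real D * (2*pi) ^ CARD('n))"
  have c_nn: "0 \<le> c" unfolding c_def by simp
  define g where "g u = p (fst u) * indicator {0..2*pi} (snd u) / (2*pi)" for u :: "(real^'n) \<times> real"
  define Y where "Y u = rff_coeff D F p (fst u) (snd u) * cos (fst u \<bullet> x + snd u)" for u :: "(real^'n) \<times> real"
  define Z where "Z u = c * (indicator {0..2*pi} (snd u) / (2*pi)) *
        (Re (F (fst u)) * cos (snd u) + Im (F (fst u)) * sin (snd u)) * cos (fst u \<bullet> x + snd u)" for u :: "(real^'n) \<times> real"
  have g_meas[measurable]: "g \<in> borel_measurable (lborel \<Otimes>\<^sub>M lborel)" unfolding g_def by measurable
  have Z_meas[measurable]: "Z \<in> borel_measurable (lborel \<Otimes>\<^sub>M lborel)" unfolding Z_def by measurable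
  have Y_meas': "Y \<in> borel_measurable (lborel \<Otimes>\<^sub>M lborel)"
    using Y_meas[of "\<lambda>_. 1"] unfolding Y_def by (simp add: measurable_cong_sets[OF sets_density refl])
  have g_nn: "0 \<le> g u" for u unfolding g_def using p_nn by simp
  have dens: "(\<lambda>(w, b). ennreal (p w * indicator {0..2*pi} b / (2*pi))) = (\<lambda>u. ennreal (g u))"
    unfolding g_def by (rule dens_eq)
  have gY: "g u * Y u = Z u" for u
  proof (cases "p (fst u) = 0")
    case True
    then have "F (fst u) = 0" using p_pos by force
    then show ?thesis using True by (simp add: g_def Z_def)
  next
    case False
    then show ?thesis unfolding Y_def Y_alt c_def[symmetric] g_def Z_def by (simp add: field_simps)
  qed
  have Zbound: "norm (Z u) \<le> c * cmod (F (fst u)) * (indicator {0..2*pi} (snd u) / (2*pi))" for u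
  proof -
    have "\<bar>Re (F (fst u)) * cos (snd u) + Im (F (fst u)) * sin (snd u)\<bar> \<le> cmod (F (fst u))"
      unfolding Arg_cos_diff[symmetric] by (simp add: abs_mult mult_left_le)
    moreover have "\<bar>cos (fst u \<bullet> x + snd u)\<bar> \<le> 1" by simp
    ultimately have "\<bar>(Re (F (fst u)) * cos (snd u) + Im (F (fst u)) * sin (snd u)) * cos (fst u \<bullet> x + snd u)\<bar> \<le> cmod (F (fst u))"
      unfolding abs_mult using mult_mono[of _ "cmod (F (fst u))" _ 1] by fastforce
    then have R: "\<bar>(Re (F (fst u)) * cos (snd u) + Im (F (fst u)) * sin (snd u)) * cos (fst u \<bullet> x + snd u)\<bar> \<le> cmod (F (fst u))"
      by (simp add: abs_mult)
    have i_nn: "0 \<le> c * (indicator {0..2*pi} (snd u) / (2*pi))" using c_nn by simp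
    have ZQ: "Z u = (c * (indicator {0..2*pi} (snd u) / (2*pi))) *
        ((Re (F (fst u)) * cos (snd u) + Im (F (fst u)) * sin (snd u)) * cos (fst u \<bullet> x + snd u))"
        unfolding Z_def by (simp only: mult.assoc)
    have "norm (Z u) \<le> (c * (indicator {0..2*pi} (snd u) / (2*pi))) * cmod (F (fst u))"
      unfolding ZQ real_norm_def by (rule abs_helper[OF i_nn R])
    then show ?thesis by (simp add: ac_simps)
  qed
  have "(\<integral>\<^sup>+ u. ennreal (c * cmod (F (fst u)) * (indicator {0..2*pi} (snd u) / (2*pi))) \<partial>(lborel \<Otimes>\<^sub>M lborel))
      = (\<integral>\<^sup>+ w. \<integral>\<^sup>+ b. ennreal (c * cmod (F w)) * ennreal (indicator {0..2*pi} b / (2*pi)) \<partial>lborel \<partial>lborel)"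
  proof -
    have pw: "ennreal (c * cmod (F w) * (indicator {0..2*pi} b / (2*pi))) = ennreal (c * cmod (F w)) * ennreal (indicator {0..2*pi} b / (2*pi))" for w b
      using c_nn by (intro ennreal_mult') simp
    show ?thesis by (subst lborel.nn_integral_fst[symmetric]) (simp_all only: pw fst_conv snd_conv, measurable)
  qed
  also have "\<dots> = (\<integral>\<^sup>+ w. ennreal (c * cmod (F w)) \<partial>lborel)"
    by (simp add: nn_integral_cmult nn_integral_unif)
  also have "\<dots> = ennreal c * (\<integral>\<^sup>+ w. ennreal (cmod (F w)) \<partial>lborel)"
    using c_nn by (simp add: ennreal_mult nn_integral_cmult)
  also have "\<dots> < \<infinity>" using F_fin by (simp add: ennreal_mult_less_top)
  finally have bint: "integrable (lborel \<Otimes>\<^sub>M lborel) (\<lambda>u. c * cmod (F (fst u)) * (indicator {0..2*pi} (snd u) / (2*pi)))"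
    using c_nn by (intro integrableI_nonneg) auto
  have Zint: "integrable (lborel \<Otimes>\<^sub>M lborel) Z"
    by (rule Bochner_Integration.integrable_bound[OF bint]) (use Zbound c_nn in \<open>auto simp: abs_mult\<close>)
  have "integrable (density (lborel \<Otimes>\<^sub>M lborel) (\<lambda>u. ennreal (g u))) Y"
    using Zint Y_meas' g_nn by (subst integrable_density) (auto simp: gY)
  moreover have "integral\<^sup>L (density (lborel \<Otimes>\<^sub>M lborel) (\<lambda>u. ennreal (g u))) Y = integral\<^sup>L (lborel \<Otimes>\<^sub>M lborel) Z"
    using Y_meas' g_nn by (subst integral_density) (auto simp: gY)
  ultimately show ?thesis unfolding dens Y_def Z_def c_def by simp
qed


lemma Y_sq:
  "(\<integral>\<^sup>+ u. ennreal ((rff_coeff D F p (fst u) (snd u) * cos (fst u \<bullet> x + snd u))\<^sup>2)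
      \<partial>density (lborel \<Otimes>\<^sub>M lborel) (\<lambda>(w, b). ennreal (p w * indicator {0..2*pi} b / (2*pi))))
   = (\<integral>\<^sup>+ w. ennreal ((cmod (F w))\<^sup>2 / p w * ((2 / (real D * (2*pi) ^ CARD('n)))\<^sup>2 *
        ((Re (F w) * cos (w \<bullet> x) - Im (F w) * sin (w \<bullet> x))\<^sup>2 / (cmod (F w))\<^sup>2 + 1/2) / 4)) \<partial>lborel)"
proof -
  define c where "c = 2 / (real D * (2*pi) ^ CARD('n))"
  define g where "g u = p (fst u) * indicator {0..2*pi} (snd u) / (2*pi)" for u :: "(real^'n) \<times> real"
  define Y where "Y u = rff_coeff D F p (fst u) (snd u) * cos (fst u \<bullet> x + snd u)" for u :: "(real^'n) \<times> real"
  define R where "R u = Re (F (fst u)) * cos (snd u) + Im (F (fst u)) * sin (snd u)" for u :: "(real^'n) \<times> real"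
  define W where "W u = c\<^sup>2 / p (fst u) * (indicator {0..2*pi} (snd u) / (2*pi) * ((R u)\<^sup>2 * (cos (fst u \<bullet> x + snd u))\<^sup>2))"
    for u :: "(real^'n) \<times> real"
  have g_meas[measurable]: "g \<in> borel_measurable (lborel \<Otimes>\<^sub>M lborel)" unfolding g_def by measurable
  have W_meas[measurable]: "W \<in> borel_measurable (lborel \<Otimes>\<^sub>M lborel)" unfolding W_def R_def by measurable
  have Y_meas': "Y \<in> borel_measurable (lborel \<Otimes>\<^sub>M lborel)"
    using Y_meas[of "\<lambda>_. 1"] unfolding Y_def by (simp add: measurable_cong_sets[OF sets_density refl])
  have g_nn: "0 \<le> g u" for u unfolding g_def using p_nn by simp
  have dens: "(\<lambda>(w, b). ennreal (p w * indicator {0..2*pi} b / (2*pi))) = (\<lambda>u. ennreal (g u))"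
    unfolding g_def by (rule dens_eq)
  have gY: "g u * (Y u)\<^sup>2 = W u" for u
  proof (cases "p (fst u) = 0")
    case True
    then show ?thesis by (simp add: g_def W_def)
  next
    case False
    then show ?thesis unfolding Y_def Y_alt c_def[symmetric] R_def[symmetric] g_def W_def
      by (simp add: field_simps power2_eq_square)
  qed
  have "(\<integral>\<^sup>+ u. ennreal ((Y u)\<^sup>2) \<partial>density (lborel \<Otimes>\<^sub>M lborel) (\<lambda>u. ennreal (g u)))
      = (\<integral>\<^sup>+ u. ennreal (g u) * ennreal ((Y u)\<^sup>2) \<partial>(lborel \<Otimes>\<^sub>M lborel))"
    using Y_meas' by (subst nn_integral_density) auto
  also have "\<dots> = (\<integral>\<^sup>+ u. ennreal (W u) \<partial>(lborel \<Otimes>\<^sub>M lborel))"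
    by (intro nn_integral_cong) (simp add: ennreal_mult'[OF g_nn, symmetric] gY)
  also have "\<dots> = (\<integral>\<^sup>+ w. \<integral>\<^sup>+ b. ennreal (W (w, b)) \<partial>lborel \<partial>lborel)"
    by (subst lborel.nn_integral_fst[symmetric]) auto
  also have "\<dots> = (\<integral>\<^sup>+ w. ennreal ((cmod (F w))\<^sup>2 / p w * (c\<^sup>2 *
        ((Re (F w) * cos (w \<bullet> x) - Im (F w) * sin (w \<bullet> x))\<^sup>2 / (cmod (F w))\<^sup>2 + 1/2) / 4)) \<partial>lborel)"
  proof (intro nn_integral_cong)
    fix w
    have k_nn: "0 \<le> c\<^sup>2 / p w * (cmod (F w))\<^sup>2" using p_nn[of w] by simp
    have Rw: "(R (w, b))\<^sup>2 = (cmod (F w))\<^sup>2 * (cos (Arg (F w) - b))\<^sup>2" for b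
      unfolding R_def fst_conv snd_conv Arg_cos_diff[symmetric] by (simp add: power_mult_distrib)
    have "(\<integral>\<^sup>+ b. ennreal (W (w, b)) \<partial>lborel)
        = (\<integral>\<^sup>+ b. ennreal (c\<^sup>2 / p w * (cmod (F w))\<^sup>2) * ennreal (indicator {0..2*pi} b / (2*pi) * ((cos (Arg (F w) - b))\<^sup>2 * (cos (w \<bullet> x + b))\<^sup>2)) \<partial>lborel)"
    proof (intro nn_integral_cong)
      fix b
      have "W (w, b) = (c\<^sup>2 / p w * (cmod (F w))\<^sup>2) * (indicator {0..2*pi} b / (2*pi) * ((cos (Arg (F w) - b))\<^sup>2 * (cos (w \<bullet> x + b))\<^sup>2))"
        unfolding W_def Rw fst_conv snd_conv by (simp only: ac_simps)
      then show "ennreal (W (w, b)) = ennreal (c\<^sup>2 / p w * (cmod (F w))\<^sup>2) * ennreal (indicator {0..2*pi} b / (2*pi) * ((cos (Arg (F w) - b))\<^sup>2 * (cos (w \<bullet> x + b))\<^sup>2))"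
        by (simp only: ennreal_mult'[OF k_nn])
    qed
    also have "\<dots> = ennreal (c\<^sup>2 / p w * (cmod (F w))\<^sup>2) * ennreal (((cos (Arg (F w) + w \<bullet> x))\<^sup>2 + 1/2) / 4)"
    proof -
      have "(\<integral>\<^sup>+ b. ennreal (c\<^sup>2 / p w * (cmod (F w))\<^sup>2) * ennreal (indicator {0..2*pi} b / (2*pi) * ((cos (Arg (F w) - b))\<^sup>2 * (cos (w \<bullet> x + b))\<^sup>2)) \<partial>lborel)
          = ennreal (c\<^sup>2 / p w * (cmod (F w))\<^sup>2) * (\<integral>\<^sup>+ b. ennreal (indicator {0..2*pi} b / (2*pi) * ((cos (Arg (F w) - b))\<^sup>2 * (cos (w \<bullet> x + b))\<^sup>2)) \<partial>lborel)"
        by (rule nn_integral_cmult) measurable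
      then show ?thesis by (simp only: trig_nn_integral)
    qed
    also have "\<dots> = ennreal (c\<^sup>2 / p w * (cmod (F w))\<^sup>2 * (((cos (Arg (F w) + w \<bullet> x))\<^sup>2 + 1/2) / 4))"
      by (simp only: ennreal_mult'[OF k_nn])
    also have "c\<^sup>2 / p w * (cmod (F w))\<^sup>2 * (((cos (Arg (F w) + w \<bullet> x))\<^sup>2 + 1/2) / 4)
        = (cmod (F w))\<^sup>2 / p w * (c\<^sup>2 *
        ((Re (F w) * cos (w \<bullet> x) - Im (F w) * sin (w \<bullet> x))\<^sup>2 / (cmod (F w))\<^sup>2 + 1/2) / 4)"
    proof (cases "F w = 0")
      case False
      have "(Re (F w) * cos (w \<bullet> x) - Im (F w) * sin (w \<bullet> x))\<^sup>2 = (cmod (F w))\<^sup>2 * (cos (Arg (F w) + w \<bullet> x))\<^sup>2"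
        unfolding Arg_cos_add[symmetric] by (simp add: power_mult_distrib)
      then show ?thesis using False by (simp add: field_simps)
    qed simp
    finally show "(\<integral>\<^sup>+ b. ennreal (W (w, b)) \<partial>lborel) = ennreal ((cmod (F w))\<^sup>2 / p w * (c\<^sup>2 *
        ((Re (F w) * cos (w \<bullet> x) - Im (F w) * sin (w \<bullet> x))\<^sup>2 / (cmod (F w))\<^sup>2 + 1/2) / 4))" .
  qed
  finally show ?thesis unfolding dens Y_def c_def .
qed

end

lemma sq_nn_eq:
  fixes f :: "'a \<Rightarrow> real"
  assumes [measurable]: "f \<in> borel_measurable M" and fin: "(\<integral>\<^sup>+ u. ennreal ((f u)\<^sup>2) \<partial>M) \<noteq> \<infinity>"
  shows "(\<integral>\<^sup>+ u. ennreal ((f u)\<^sup>2) \<partial>M) = ennreal (\<integral> u. (f u)\<^sup>2 \<partial>M)" and "0 \<le> (\<integral> u. (f u)\<^sup>2 \<partial>M)"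
proof -
  have "integrable M (\<lambda>u. (f u)\<^sup>2)" using fin by (intro integrableI_nonneg) (auto simp: top.not_eq_extremum)
  then show "(\<integral>\<^sup>+ u. ennreal ((f u)\<^sup>2) \<partial>M) = ennreal (\<integral> u. (f u)\<^sup>2 \<partial>M)"
    by (intro nn_integral_eq_integral) auto
  show "0 \<le> (\<integral> u. (f u)\<^sup>2 \<partial>M)" by (intro Bochner_Integration.integral_nonneg) auto
qed

theorem theorem6:
  fixes f :: "real^'n \<Rightarrow> real" and F :: "real^'n \<Rightarrow> complex" and D :: nat
  assumes f_meas: "f \<in> borel_measurable lborel"
    and f_L2: "integrable lborel (\<lambda>x. (f x)\<^sup>2)"
    and F_fourier: "is_fourier_transform_L2 f F"
    and F_pos: "0 < (\<integral>\<^sup>+ w. ennreal (cmod (F w)) \<partial>lborel)"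
    and F_fin: "(\<integral>\<^sup>+ w. ennreal (cmod (F w)) \<partial>lborel) < \<infinity>"
    and D_pos: "0 < D"
  shows "\<forall>x. \<forall>p \<in> admissible_densities F.
           rff_second_moment D F (opt_density F) x
             \<le> ennreal (sqrt 3) * rff_second_moment D F p x"
proof (intro allI ballI)
  fix x :: "real^'n" and p assume pA: "p \<in> admissible_densities F"
  have F_meas[measurable]: "F \<in> borel_measurable lborel"
    using F_fourier unfolding is_fourier_transform_L2_def by simp
  define a where "a w = cmod (F w)" for w
  have a_meas[measurable]: "a \<in> borel_measurable lborel" unfolding a_def by measurable
  have a_int: "integrable lborel a"
    unfolding a_def using F_fin by (intro integrableI_nonneg) auto
  define I where "I = (\<integral> w. a w \<partial>lborel)"
  have aI: "(\<integral>\<^sup>+ w. ennreal (cmod (F w)) \<partial>lborel) = ennreal I"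
    unfolding I_def using a_int by (subst nn_integral_eq_integral[symmetric]) (auto simp: a_def)
  have I_pos: "0 < I" using F_pos unfolding aI by (simp add: ennreal_less_iff)
  have opt: "opt_density F = (\<lambda>w. cmod (F w) / I)"
    unfolding opt_density_def I_def a_def by simp
  define c where "c = 2 / (real D * (2*pi) ^ CARD('n))"
  have c_pos: "0 < c" unfolding c_def using D_pos by simp
  define h where "h w = c\<^sup>2 * ((Re (F w) * cos (w \<bullet> x) - Im (F w) * sin (w \<bullet> x))\<^sup>2 / (cmod (F w))\<^sup>2 + 1/2) / 4" for w
  have h_meas[measurable]: "h \<in> borel_measurable lborel" unfolding h_def by measurable
  have ratio: "0 \<le> (Re (F w) * cos (w \<bullet> x) - Im (F w) * sin (w \<bullet> x))\<^sup>2 / (cmod (F w))\<^sup>2 \<and>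
      (Re (F w) * cos (w \<bullet> x) - Im (F w) * sin (w \<bullet> x))\<^sup>2 / (cmod (F w))\<^sup>2 \<le> 1" for w
  proof (cases "F w = 0")
    case False
    have "(Re (F w) * cos (w \<bullet> x) - Im (F w) * sin (w \<bullet> x))\<^sup>2 / (cmod (F w))\<^sup>2 = (cos (Arg (F w) + w \<bullet> x))\<^sup>2"
      unfolding Arg_cos_add[symmetric] using False by (simp add: power_mult_distrib)
    then show ?thesis by (simp add: abs_square_le_1)
  qed simp
  have gen_lo: "c\<^sup>2 / 8 \<le> c\<^sup>2 * (t + 1/2) / 4" if "0 \<le> t" for t using that c_pos by (simp add: field_simps)
  have gen_hi: "c\<^sup>2 * (t + 1/2) / 4 \<le> 3 * (c\<^sup>2 / 8)" if "t \<le> 1" for t using that c_pos by (simp add: field_simps)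
  have h_lo: "c\<^sup>2 / 8 \<le> h w" for w unfolding h_def using ratio[of w] gen_lo by blast
  have h_hi: "h w \<le> 3 * (c\<^sup>2 / 8)" for w unfolding h_def using ratio[of w] gen_hi by blast
  have p_cont: "continuous_on UNIV p" and p_nn: "\<And>w. 0 \<le> p w" and p_one: "(\<integral>\<^sup>+ w. ennreal (p w) \<partial>lborel) = 1"
    and p_pos': "\<And>w. 0 < cmod (F w) \<Longrightarrow> 0 < p w"
    using pA unfolding admissible_densities_def by auto
  have p_meas[measurable]: "p \<in> borel_measurable lborel"
    using borel_measurable_continuous_onI[OF p_cont] by simp
  have p_pos: "\<And>w. F w \<noteq> 0 \<Longrightarrow> 0 < p w" using p_pos' by simp
  define q where "q = opt_density F"
  have q_eq: "q w = cmod (F w) / I" for w unfolding q_def opt by simp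
  have q_meas[measurable]: "q \<in> borel_measurable lborel" unfolding q_def opt by measurable
  have q_nn: "\<And>w. 0 \<le> q w" using I_pos by (simp add: q_eq)
  have q_pos: "\<And>w. F w \<noteq> 0 \<Longrightarrow> 0 < q w" using I_pos by (simp add: q_eq)
  have q_one: "(\<integral>\<^sup>+ w. ennreal (q w) \<partial>lborel) = 1"
  proof -
    have "(\<integral>\<^sup>+ w. ennreal (q w) \<partial>lborel) = (\<integral>\<^sup>+ w. ennreal (cmod (F w)) * ennreal (1 / I) \<partial>lborel)"
      using I_pos by (intro nn_integral_cong) (simp add: q_eq ennreal_mult'[symmetric])
    also have "\<dots> = ennreal I * ennreal (1 / I)" by (simp add: nn_integral_multc aI)
    also have "\<dots> = 1" using I_pos by (simp add: ennreal_mult'[symmetric])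
    finally show ?thesis .
  qed
  define Mr where "Mr r = density (lborel \<Otimes>\<^sub>M lborel) (\<lambda>(w, b). ennreal (r w * indicator {0..2*pi} b / (2*pi)))"
    for r :: "real^'n \<Rightarrow> real"
  define Yr where "Yr r u = rff_coeff D F r (fst u) (snd u) * cos (fst u \<bullet> x + snd u)"
    for r :: "real^'n \<Rightarrow> real" and u :: "(real^'n) \<times> real"
  define \<mu> where "\<mu> = (\<integral> u. 2 / (real D * (2*pi) ^ CARD('n)) * (indicator {0..2*pi} (snd u) / (2*pi)) *
        (Re (F (fst u)) * cos (snd u) + Im (F (fst u)) * sin (snd u)) * cos (fst u \<bullet> x + snd u) \<partial>(lborel \<Otimes>\<^sub>M lborel))"
  define A where "A r = (\<integral>\<^sup>+ u. ennreal ((Yr r u)\<^sup>2) \<partial>Mr r)" for r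
  define E where "E r = (\<integral> u. (Yr r u)\<^sup>2 \<partial>Mr r)" for r
  have gen: "rff_second_moment D F r x = (if A r = \<infinity> then \<infinity> else ennreal (real D * E r + real D * (real D - 1) * \<mu>\<^sup>2))
      \<and> A r = (\<integral>\<^sup>+ w. ennreal ((a w)\<^sup>2 / r w * h w) \<partial>lborel)
      \<and> (A r \<noteq> \<infinity> \<longrightarrow> A r = ennreal (E r) \<and> 0 \<le> E r)"
    if [measurable]: "r \<in> borel_measurable lborel" and r_nn: "\<And>w. 0 \<le> r w" and r_one: "(\<integral>\<^sup>+ w. ennreal (r w) \<partial>lborel) = 1"
      and r_pos: "\<And>w. F w \<noteq> 0 \<Longrightarrow> 0 < r w" for r
  proof (intro conjI impI)
    have PM: "prob_space (Mr r)" unfolding Mr_def by (rule density_prob[OF that(1) r_nn r_one])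
    have Ym: "Yr r \<in> borel_measurable (Mr r)" unfolding Yr_def Mr_def
      by (rule Y_meas[OF F_meas F_fin that(1) r_nn r_pos])
    have YI: "integrable (Mr r) (Yr r) \<and> integral\<^sup>L (Mr r) (Yr r) = \<mu>" unfolding Yr_def Mr_def \<mu>_def
      by (rule Y_int[OF F_meas F_fin that(1) r_nn r_pos])
    have "rff_second_moment D F r x = (\<integral>\<^sup>+ z. ennreal ((\<Sum>k<D. Yr r (z k))\<^sup>2) \<partial>PiM {..<D} (\<lambda>_. Mr r))"
      unfolding rff_second_moment_def rff_G_def rff_law_def Yr_def Mr_def ..
    also have "\<dots> = (if A r = \<infinity> then \<infinity> else ennreal (real D * E r + real D * (real D - 1) * \<mu>\<^sup>2))"
      unfolding A_def E_def using moment_formula[OF PM Ym conjunct1[OF YI] D_pos] YI by simp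
    finally show "rff_second_moment D F r x = (if A r = \<infinity> then \<infinity> else ennreal (real D * E r + real D * (real D - 1) * \<mu>\<^sup>2))" .
    show "A r = (\<integral>\<^sup>+ w. ennreal ((a w)\<^sup>2 / r w * h w) \<partial>lborel)"
      unfolding A_def Yr_def Mr_def a_def h_def c_def by (rule Y_sq[OF F_meas F_fin that(1) r_nn r_pos])
    assume fin: "A r \<noteq> \<infinity>"
    show "A r = ennreal (E r)" "0 \<le> E r" using sq_nn_eq[OF Ym fin[unfolded A_def]] unfolding A_def E_def by auto
  qed
  note gp = gen[OF p_meas p_nn p_one p_pos]
  note gq = gen[OF q_meas q_nn q_one q_pos]
  have key: "(\<integral>\<^sup>+ w. ennreal (I * a w * h w) \<partial>lborel) < \<infinity>"
     "(\<integral>\<^sup>+ w. ennreal (I * a w * h w) \<partial>lborel) \<le> ennreal (sqrt 3) * (\<integral>\<^sup>+ w. ennreal ((a w)\<^sup>2 / p w * h w) \<partial>lborel)"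
    using key_ineq[OF a_meas p_meas h_meas _ p_nn p_one _ _ h_lo h_hi a_int I_def I_pos] c_pos p_pos
    by (auto simp: a_def)
  have Aq0: "A q = (\<integral>\<^sup>+ w. ennreal ((a w)\<^sup>2 / q w * h w) \<partial>lborel)" using gq by simp
  have Aq: "A q = (\<integral>\<^sup>+ w. ennreal (I * a w * h w) \<partial>lborel)"
    unfolding Aq0
  proof (intro nn_integral_cong)
    fix w show "ennreal ((a w)\<^sup>2 / q w * h w) = ennreal (I * a w * h w)"
      using I_pos by (cases "a w = 0") (auto simp: q_eq a_def[symmetric] power2_eq_square mult.commute)
  qed
  have Ap: "A p = (\<integral>\<^sup>+ w. ennreal ((a w)\<^sup>2 / p w * h w) \<partial>lborel)" using gp by simp
  have Aq_fin: "A q \<noteq> \<infinity>" using key(1) Aq by simp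
  show "rff_second_moment D F (opt_density F) x \<le> ennreal (sqrt 3) * rff_second_moment D F p x"
  proof (cases "A p = \<infinity>")
    case True
    then show ?thesis using gp by (simp add: ennreal_mult_top)
  next
    case False
    have Eq: "A q = ennreal (E q)" "0 \<le> E q" using gq Aq_fin by auto
    have Ep: "A p = ennreal (E p)" "0 \<le> E p" using gp False by auto
    have "ennreal (E q) \<le> ennreal (sqrt 3) * ennreal (E p)"
      using key(2) unfolding Aq[symmetric] Ap[symmetric] Eq Ep .
    then have "ennreal (E q) \<le> ennreal (sqrt 3 * E p)" using ennreal_mult'[of "sqrt 3" "E p"] by simp
    then have EqEp: "E q \<le> sqrt 3 * E p" using Ep by (simp add: ennreal_le_iff)
    have D1: "0 \<le> real D - 1" using D_pos by simp
    have "real D * E q + real D * (real D - 1) * \<mu>\<^sup>2 \<le> sqrt 3 * (real D * E p + real D * (real D - 1) * \<mu>\<^sup>2)"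
    proof -
      have "real D * E q \<le> real D * (sqrt 3 * E p)" using EqEp by (simp add: mult_left_mono)
      moreover have "real D * (real D - 1) * \<mu>\<^sup>2 \<le> sqrt 3 * (real D * (real D - 1) * \<mu>\<^sup>2)"
      proof -
        have X: "0 \<le> real D * (real D - 1) * \<mu>\<^sup>2" using D1 by simp
        have "1 \<le> sqrt (3::real)" by simp
        from mult_right_mono[OF this X] show ?thesis by simp
      qed
      ultimately show ?thesis by (simp add: algebra_simps)
    qed
    then have "ennreal (real D * E q + real D * (real D - 1) * \<mu>\<^sup>2)
        \<le> ennreal (sqrt 3) * ennreal (real D * E p + real D * (real D - 1) * \<mu>\<^sup>2)"
      unfolding ennreal_mult'[of "sqrt 3" "real D * E p + real D * (real D - 1) * \<mu>\<^sup>2", OF real_sqrt_ge_zero, symmetric, OF zero_le_numeral]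
      by (rule ennreal_leI)
    then show ?thesis using gp gq Aq_fin False unfolding q_def by simp
  qed
qed

end
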